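(* Let $\phi:\mathbb{F}_2^n\to\mathbb{C}$ be a stabilizer state and $L=\mathcal{L}(\phi)$ its Lagrangian subspace. Then for every nonzero $f:\mathbb{F}_2^n\to\mathbb{C}$, $$\Big(\frac{|\langle f,\phi\rangle|}{\|f\|_2}\Big)^4\le P_f(L)\le\Big(\frac{\|f\|_{U^3}}{\|f\|_2}\Big)^4.$$
   Context: $\langle f,g\rangle=\mathbb{E}_xf(x)\overline{g(x)}$, $\|f\|_2=\langle f,f\rangle^{1/2}$, $\Delta_af(x)=f(x+a)\overline{f(x)}$, $\hat g(b)=\mathbb{E}_xg(x)(-1)^{b\cdot x}$, $\|f\|_{U^3}=(\mathbb{E}_{x,a,b,c}\Delta_a\Delta_b\Delta_cf(x))^{1/8}$. A stabilizer state is $\phi$ with $\|\phi\|_2=\|\phi\|_{U^3}=1$; for such $\phi$ there is a unique Lagrangian subspace $\mathcal{L}(\phi)\le\mathbb{F}_2^{2n}$ (maximal isotropic for $[(a,b),(c,d)]=a\cdot d+b\cdot c$) with $|\widehat{\Delta_a\phi}(b)|=\mathbf{1}_{\mathcal{L}(\phi)}(a,b)$. The characteristic distribution of nonzero $f$ is the probability distribution $P_f(a,b)=|\widehat{\Delta_af}(b)|^2/(2^n\|f\|_2^4)$ on $\mathbb{F}_2^{2n}$, and $P_f(L)=\sum_{(a,b)\in L}P_f(a,b)$. *)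

theory Defs
  imports Complex_Main
begin

text \<open>The vector space F_2^n is modelled as 'n \<Rightarrow> bool for a finite index type 'n,
  with n = card (UNIV :: 'n set). Addition is pointwise exclusive or.\<close>

type_synonym 'n f2vec = "'n \<Rightarrow> bool"

definition vadd :: "'n f2vec \<Rightarrow> 'n f2vec \<Rightarrow> 'n f2vec" where
  "vadd x y = (\<lambda>i. x i \<noteq> y i)"

definition vzero :: "'n f2vec" where
  "vzero = (\<lambda>i. False)"

text \<open>Dot product a \<cdot> x, as a natural number (only its parity matters).\<close>
definition dotp :: "('n::finite) f2vec \<Rightarrow> 'n f2vec \<Rightarrow> nat" where
  "dotp x y = card {i. x i \<and> y i}"

definition avg :: "(('n::finite) f2vec \<Rightarrow> complex) \<Rightarrow> complex" where
  "avg g = (\<Sum>x\<in>UNIV. g x) / (2 ^ card (UNIV :: 'n set))"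

definition inner_f :: "(('n::finite) f2vec \<Rightarrow> complex) \<Rightarrow> ('n f2vec \<Rightarrow> complex) \<Rightarrow> complex" where
  "inner_f f g = avg (\<lambda>x. f x * cnj (g x))"

definition norm2 :: "(('n::finite) f2vec \<Rightarrow> complex) \<Rightarrow> real" where
  "norm2 f = sqrt (Re (inner_f f f))"

definition Delta :: "'n f2vec \<Rightarrow> ('n f2vec \<Rightarrow> complex) \<Rightarrow> 'n f2vec \<Rightarrow> complex" where
  "Delta a f x = f (vadd x a) * cnj (f x)"

definition fhat :: "(('n::finite) f2vec \<Rightarrow> complex) \<Rightarrow> 'n f2vec \<Rightarrow> complex" where
  "fhat g b = avg (\<lambda>x. g x * (-1) ^ dotp b x)"

text \<open>Gowers U^3 norm: (E_{x,a,b,c} \<Delta>_a \<Delta>_b \<Delta>_c f(x))^{1/8}; the average is a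
  nonnegative real number, we take its real part.\<close>
definition U3 :: "(('n::finite) f2vec \<Rightarrow> complex) \<Rightarrow> real" where
  "U3 f = (Re (avg (\<lambda>x. avg (\<lambda>a. avg (\<lambda>b. avg (\<lambda>c.
              Delta a (Delta b (Delta c f)) x)))))) powr (1/8)"

definition stabilizer_state :: "(('n::finite) f2vec \<Rightarrow> complex) \<Rightarrow> bool" where
  "stabilizer_state \<phi> \<longleftrightarrow> norm2 \<phi> = 1 \<and> U3 \<phi> = 1"

text \<open>Symplectic form on F_2^{2n}: [(a,b),(c,d)] = a\<cdot>d + b\<cdot>c (mod 2); it vanishes iff even.\<close>
definition sympl_zero :: "(('n::finite) f2vec \<times> 'n f2vec) \<Rightarrow> ('n f2vec \<times> 'n f2vec) \<Rightarrow> bool" where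
  "sympl_zero u v = even (dotp (fst u) (snd v) + dotp (snd u) (fst v))"

definition subspace2 :: "(('n::finite) f2vec \<times> 'n f2vec) set \<Rightarrow> bool" where
  "subspace2 L \<longleftrightarrow> (vzero, vzero) \<in> L \<and>
     (\<forall>u\<in>L. \<forall>v\<in>L. (vadd (fst u) (fst v), vadd (snd u) (snd v)) \<in> L)"

definition isotropic :: "(('n::finite) f2vec \<times> 'n f2vec) set \<Rightarrow> bool" where
  "isotropic L \<longleftrightarrow> subspace2 L \<and> (\<forall>u\<in>L. \<forall>v\<in>L. sympl_zero u v)"

definition lagrangian :: "(('n::finite) f2vec \<times> 'n f2vec) set \<Rightarrow> bool" where
  "lagrangian L \<longleftrightarrow> isotropic L \<and> (\<forall>M. isotropic M \<and> L \<subseteq> M \<longrightarrow> M = L)"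

definition char_dist :: "(('n::finite) f2vec \<Rightarrow> complex) \<Rightarrow> ('n f2vec \<times> 'n f2vec) \<Rightarrow> real" where
  "char_dist f ab = (cmod (fhat (Delta (fst ab) f) (snd ab)))^2 / (2 ^ card (UNIV :: 'n set) * (norm2 f)^4)"

definition char_dist_set :: "(('n::finite) f2vec \<Rightarrow> complex) \<Rightarrow> ('n f2vec \<times> 'n f2vec) set \<Rightarrow> real" where
  "char_dist_set f L = (\<Sum>ab\<in>L. char_dist f ab)"

definition lagr_of :: "(('n::finite) f2vec \<Rightarrow> complex) \<Rightarrow> ('n f2vec \<times> 'n f2vec) set" where
  "lagr_of \<phi> = (THE L. lagrangian L \<and>
      (\<forall>a b. cmod (fhat (Delta a \<phi>) b) = (if (a, b) \<in> L then 1 else 0)))"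

end

theory Submission
  imports Defs "HOL-Library.Cardinality" "HOL-Analysis.Convex"
begin

lemma vadd_comm: "vadd x y = vadd y x" unfolding vadd_def by auto
lemma vadd_assoc: "vadd (vadd x y) z = vadd x (vadd y z)" unfolding vadd_def by auto
lemma vadd_self[simp]: "vadd x x = vzero" unfolding vadd_def vzero_def by auto
lemma vadd_zero[simp]: "vadd x vzero = x" "vadd vzero x = x" unfolding vadd_def vzero_def by auto
lemma vadd_cancel[simp]: "vadd (vadd x a) a = x" "vadd a (vadd a x) = x" unfolding vadd_def by auto
lemma vadd_eq_zero: "vadd x y = vzero \<longleftrightarrow> x = y" unfolding vadd_def vzero_def by (auto simp: fun_eq_iff)

lemma card_vec: "card (UNIV :: ('n::finite) f2vec set) = 2 ^ card (UNIV :: 'n set)"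
  by (simp add: card_fun)

lemma sum_shift: "(\<Sum>x\<in>UNIV. g (vadd x a)) = (\<Sum>x\<in>UNIV. (g x :: 'b::comm_monoid_add))"
  by (rule sum.reindex_bij_witness[where i="\<lambda>x. vadd x a" and j="\<lambda>x. vadd x a"]) auto

lemma sum_shift_L: "(\<Sum>x\<in>UNIV. g (vadd a x)) = (\<Sum>x\<in>UNIV. (g x :: 'b::comm_monoid_add))"
  using sum_shift[of "g" a] by (simp add: vadd_comm)

definition chi :: "('n::finite) f2vec \<Rightarrow> 'n f2vec \<Rightarrow> complex" where
  "chi b x = (-1) ^ dotp b x"

lemma dotp_sym: "dotp x y = dotp y x" unfolding dotp_def by (metis (no_types, lifting) Collect_cong)

lemma dotp_add: "dotp b (vadd x y) + 2 * card {i. b i \<and> x i \<and> y i} = dotp b x + dotp b y"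
proof -
  define A where "A = {i. b i \<and> x i \<and> y i}"
  define B where "B = {i. b i \<and> x i \<and> \<not> y i}"
  define C where "C = {i. b i \<and> \<not> x i \<and> y i}"
  have 1: "dotp b x = card A + card B"
  proof -
    have "{i. b i \<and> x i} = A \<union> B" by (auto simp: A_def B_def)
    moreover have "A \<inter> B = {}" by (auto simp: A_def B_def)
    ultimately show ?thesis unfolding dotp_def by (simp add: card_Un_disjoint)
  qed
  have 2: "dotp b y = card A + card C"
  proof -
    have "{i. b i \<and> y i} = A \<union> C" by (auto simp: A_def C_def)
    moreover have "A \<inter> C = {}" by (auto simp: A_def C_def)
    ultimately show ?thesis unfolding dotp_def by (simp add: card_Un_disjoint)
  qed
  have 3: "dotp b (vadd x y) = card B + card C"
  proof -
    have "{i. b i \<and> vadd x y i} = B \<union> C" by (auto simp: B_def C_def vadd_def)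
    moreover have "B \<inter> C = {}" by (auto simp: B_def C_def)
    ultimately show ?thesis unfolding dotp_def by (simp add: card_Un_disjoint)
  qed
  show ?thesis using 1 2 3 A_def by simp
qed

lemma chi_mult2: "chi b (vadd x y) = chi b x * chi b y"
proof -
  have "chi b x * chi b y = (-1) ^ (dotp b (vadd x y) + 2 * card {i. b i \<and> x i \<and> y i})"
    unfolding chi_def by (simp add: dotp_add power_add)
  also have "\<dots> = chi b (vadd x y)" unfolding chi_def by (simp add: power_add power_mult)
  finally show ?thesis by simp
qed

lemma chi_sym: "chi b x = chi x b" unfolding chi_def by (simp add: dotp_sym)

lemma chi_mult1: "chi (vadd b c) x = chi b x * chi c x"
  by (simp add: chi_sym[of _ x] chi_mult2)

lemma chi_pm: "chi b x = 1 \<or> chi b x = -1"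
  unfolding chi_def by (simp add: minus_one_power_iff)

lemma chi_sq[simp]: "chi b x * chi b x = 1"
  using chi_pm[of b x] by auto

lemma cnj_chi[simp]: "cnj (chi b x) = chi b x"
  using chi_pm[of b x] by auto

lemma cmod_chi[simp]: "cmod (chi b x) = 1"
  using chi_pm[of b x] by auto

lemma chi_zero[simp]: "chi vzero x = 1" "chi x vzero = 1"
  unfolding chi_def dotp_def vzero_def by auto

lemma chi_one_iff: "chi b x = 1 \<longleftrightarrow> even (dotp b x)"
  unfolding chi_def by (simp add: minus_one_power_iff)

lemma chi_sum: fixes z :: "('n::finite) f2vec" shows "(\<Sum>b\<in>UNIV. chi b z) = (if z = vzero then 2 ^ card (UNIV :: 'n set) else 0)"
proof (cases "z = vzero")
  case True
  then show ?thesis by (simp add: card_vec)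
next
  case False
  then obtain i0 where i0: "z i0" unfolding vzero_def by auto
  define e :: "'n f2vec" where "e = (\<lambda>i. i = i0)"
  have ce: "chi e z = -1"
  proof -
    have "{i. e i \<and> z i} = {i0}" using i0 by (auto simp: e_def)
    then show ?thesis unfolding chi_def dotp_def by simp
  qed
  have "(\<Sum>b\<in>UNIV. chi b z) = (\<Sum>b\<in>UNIV. chi (vadd b e) z)" by (rule sum_shift[of "\<lambda>b. chi b z", symmetric])
  also have "\<dots> = - (\<Sum>b\<in>UNIV. chi b z)" by (simp add: chi_mult1 ce sum_negf)
  finally show ?thesis using False by simp
qed


lemma fhat_chi: fixes g :: "('n::finite) f2vec \<Rightarrow> complex"
  shows "fhat g b = (\<Sum>x\<in>UNIV. g x * chi b x) / 2 ^ card (UNIV :: 'n set)"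
  by (simp add: fhat_def avg_def chi_def)

lemma cnj_sum_div: "cnj ((\<Sum>x\<in>A. h x) / 2 ^ k) = (\<Sum>x\<in>A. cnj (h x)) / 2 ^ k"
  by (simp add: cnj_sum)

lemma sum_swap3: "(\<Sum>b\<in>A. \<Sum>x\<in>B. \<Sum>y\<in>C. H b x y) = (\<Sum>x\<in>B. \<Sum>y\<in>C. \<Sum>b\<in>A. H b x y)"
  by (subst sum.swap) (rule sum.cong[OF refl], rule sum.swap)

lemma parseval:
  fixes g :: "('n::finite) f2vec \<Rightarrow> complex"
  shows "(\<Sum>b\<in>UNIV. fhat g b * cnj (fhat g b)) = avg (\<lambda>x. g x * cnj (g x))"
proof -
  let ?N = "2 ^ card (UNIV :: 'n set) :: complex"
  have 1: "fhat g b * cnj (fhat g b) = (\<Sum>x\<in>UNIV. \<Sum>y\<in>UNIV. g x * cnj (g y) * chi b (vadd x y)) / ?N^2" for b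
  proof -
    have "fhat g b * cnj (fhat g b) = ((\<Sum>x\<in>UNIV. g x * chi b x) * (\<Sum>y\<in>UNIV. cnj (g y) * chi b y)) / ?N^2"
      unfolding fhat_chi cnj_sum_div by (simp add: power2_eq_square)
    also have "\<dots> = (\<Sum>x\<in>UNIV. \<Sum>y\<in>UNIV. g x * cnj (g y) * chi b (vadd x y)) / ?N^2"
      by (simp add: sum_product chi_mult2 mult_ac)
    finally show ?thesis .
  qed
  have "(\<Sum>b\<in>UNIV. fhat g b * cnj (fhat g b)) = (\<Sum>x\<in>UNIV. \<Sum>y\<in>UNIV. g x * cnj (g y) * (\<Sum>b\<in>UNIV. chi b (vadd x y))) / ?N^2"
  proof -
    have "(\<Sum>b\<in>UNIV. \<Sum>x\<in>UNIV. \<Sum>y\<in>UNIV. g x * cnj (g y) * chi b (vadd x y))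
       = (\<Sum>x\<in>UNIV. \<Sum>y\<in>UNIV. \<Sum>b\<in>UNIV. g x * cnj (g y) * chi b (vadd x y))"
      by (rule sum_swap3)
    also have "\<dots> = (\<Sum>x\<in>UNIV. \<Sum>y\<in>UNIV. g x * cnj (g y) * (\<Sum>b\<in>UNIV. chi b (vadd x y)))"
      by (simp only: sum_distrib_left)
    finally show ?thesis unfolding 1 sum_divide_distrib[symmetric] by simp
  qed
  also have "\<dots> = (\<Sum>x\<in>UNIV. g x * cnj (g x) * ?N) / ?N^2"
  proof -
    have "(\<Sum>y\<in>UNIV. g x * cnj (g y) * (\<Sum>b\<in>UNIV. chi b (vadd x y))) = g x * cnj (g x) * ?N" for x
    proof -
      have "(\<Sum>y\<in>UNIV. g x * cnj (g y) * (\<Sum>b\<in>UNIV. chi b (vadd x y))) = (\<Sum>y\<in>UNIV. if y = x then g x * cnj (g y) * ?N else 0)"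
        by (rule sum.cong) (auto simp: chi_sum vadd_eq_zero)
      then show ?thesis by simp
    qed
    then show ?thesis by simp
  qed
  also have "\<dots> = avg (\<lambda>x. g x * cnj (g x))"
    unfolding avg_def by (simp add: sum_distrib_right[symmetric] power2_eq_square)
  finally show ?thesis .
qed

lemma autocorr:
  fixes g :: "('n::finite) f2vec \<Rightarrow> complex"
  shows "fhat g b * cnj (fhat g b) = fhat (\<lambda>t. avg (Delta t g)) b"
proof -
  let ?N = "2 ^ card (UNIV :: 'n set) :: complex"
  have "fhat (\<lambda>t. avg (Delta t g)) b = (\<Sum>t\<in>UNIV. \<Sum>x\<in>UNIV. g (vadd x t) * cnj (g x) * chi b t) / ?N^2"
    unfolding fhat_chi avg_def Delta_def
    by (simp add: sum_divide_distrib[symmetric] sum_distrib_right power2_eq_square)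
  also have "\<dots> = (\<Sum>x\<in>UNIV. \<Sum>t\<in>UNIV. g (vadd x t) * cnj (g x) * chi b t) / ?N^2"
    by (subst sum.swap) simp
  also have "\<dots> = (\<Sum>x\<in>UNIV. \<Sum>t\<in>UNIV. g t * cnj (g x) * (chi b x * chi b t)) / ?N^2"
  proof -
    have "(\<Sum>t\<in>UNIV. g (vadd x t) * cnj (g x) * chi b t) = (\<Sum>t\<in>UNIV. g t * cnj (g x) * (chi b x * chi b t))" for x
    proof -
      have "(\<Sum>t\<in>UNIV. g (vadd x t) * cnj (g x) * chi b t) = (\<Sum>t\<in>UNIV. g (vadd x (vadd x t)) * cnj (g x) * chi b (vadd x t))"
        by (rule sum_shift_L[of "\<lambda>t. g (vadd x t) * cnj (g x) * chi b t", symmetric])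
      then show ?thesis by (simp add: chi_mult2)
    qed
    then show ?thesis by simp
  qed
  also have "\<dots> = ((\<Sum>t\<in>UNIV. g t * chi b t) * (\<Sum>x\<in>UNIV. cnj (g x) * chi b x)) / ?N^2"
    unfolding sum_product by (subst sum.swap) (simp add: mult_ac)
  also have "\<dots> = fhat g b * cnj (fhat g b)"
    unfolding fhat_chi cnj_sum_div by (simp add: power2_eq_square)
  finally show ?thesis by simp
qed

lemma delta_avg:
  fixes G :: "('n::finite) f2vec \<Rightarrow> complex"
  shows "avg (\<lambda>x. avg (\<lambda>a. Delta a G x)) = avg G * cnj (avg G)"
proof -
  have "(\<Sum>x\<in>UNIV. \<Sum>a\<in>UNIV. G (vadd x a) * cnj (G x)) = (\<Sum>x\<in>UNIV. (\<Sum>a\<in>UNIV. G a) * cnj (G x))"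
    proof -
    have "(\<Sum>a\<in>UNIV. G (vadd x a)) = (\<Sum>a\<in>UNIV. G a)" for x by (rule sum_shift_L[of G x])
    then show ?thesis by (simp add: sum_distrib_right[symmetric])
  qed
  then show ?thesis
    unfolding avg_def Delta_def
    by (simp add: sum_divide_distrib[symmetric] sum_distrib_left sum_distrib_right cnj_sum mult_ac)
qed


lemma avg_swap: "avg (\<lambda>x. avg (\<lambda>y. F x y)) = avg (\<lambda>y. avg (\<lambda>x. F x y))"
  unfolding avg_def sum_divide_distrib[symmetric] by (subst sum.swap) (simp add: mult.commute)

lemma avg4: "avg (\<lambda>x. avg (\<lambda>a. avg (\<lambda>b. avg (\<lambda>c. F x a b c))))
   = avg (\<lambda>b. avg (\<lambda>c. avg (\<lambda>x. avg (\<lambda>a. F x a b c))))"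
proof -
  have s1: "avg (\<lambda>a. avg (\<lambda>b. avg (\<lambda>c. F x a b c))) = avg (\<lambda>b. avg (\<lambda>c. avg (\<lambda>a. F x a b c)))" for x
  proof -
    have "avg (\<lambda>a. avg (\<lambda>b. avg (\<lambda>c. F x a b c))) = avg (\<lambda>b. avg (\<lambda>a. avg (\<lambda>c. F x a b c)))"
      by (rule avg_swap)
    also have "\<dots> = avg (\<lambda>b. avg (\<lambda>c. avg (\<lambda>a. F x a b c)))"
      by (simp only: avg_swap[of "\<lambda>a c. F x a _ c"])
    finally show ?thesis .
  qed
  have "avg (\<lambda>x. avg (\<lambda>a. avg (\<lambda>b. avg (\<lambda>c. F x a b c)))) = avg (\<lambda>x. avg (\<lambda>b. avg (\<lambda>c. avg (\<lambda>a. F x a b c))))"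
    by (simp only: s1)
  also have "\<dots> = avg (\<lambda>b. avg (\<lambda>x. avg (\<lambda>c. avg (\<lambda>a. F x a b c))))"
    by (rule avg_swap)
  also have "\<dots> = avg (\<lambda>b. avg (\<lambda>c. avg (\<lambda>x. avg (\<lambda>a. F x a b c))))"
    by (simp only: avg_swap[of "\<lambda>x c. avg (\<lambda>a. F x a _ c)"])
  finally show ?thesis .
qed

lemma cnj_fhat_prod: "cnj (fhat g b * cnj (fhat g b)) = fhat g b * cnj (fhat g b)"
  by (simp add: mult.commute)

lemma U3_inner:
  fixes f :: "('n::finite) f2vec \<Rightarrow> complex"
  shows "avg (\<lambda>x. avg (\<lambda>a. avg (\<lambda>b. avg (\<lambda>c. Delta a (Delta b (Delta c f)) x))))
     = (\<Sum>c\<in>UNIV. \<Sum>\<xi>\<in>UNIV. (fhat (Delta c f) \<xi> * cnj (fhat (Delta c f) \<xi>))^2) / 2 ^ card (UNIV :: 'n set)"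
proof -
  have "avg (\<lambda>x. avg (\<lambda>a. avg (\<lambda>b. avg (\<lambda>c. Delta a (Delta b (Delta c f)) x))))
     = avg (\<lambda>b. avg (\<lambda>c. avg (Delta b (Delta c f)) * cnj (avg (Delta b (Delta c f)))))"
    by (simp only: avg4 delta_avg)
  also have "\<dots> = avg (\<lambda>c. avg (\<lambda>b. avg (Delta b (Delta c f)) * cnj (avg (Delta b (Delta c f)))))"
    by (rule avg_swap)
  also have "\<dots> = avg (\<lambda>c. \<Sum>\<xi>\<in>UNIV. (fhat (Delta c f) \<xi> * cnj (fhat (Delta c f) \<xi>))^2)"
  proof -
    have "avg (\<lambda>b. avg (Delta b g) * cnj (avg (Delta b g))) = (\<Sum>\<xi>\<in>UNIV. (fhat g \<xi> * cnj (fhat g \<xi>))^2)"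
      for g :: "'n f2vec \<Rightarrow> complex"
    proof -
      have "avg (\<lambda>b. avg (Delta b g) * cnj (avg (Delta b g)))
          = (\<Sum>\<xi>\<in>UNIV. fhat (\<lambda>t. avg (Delta t g)) \<xi> * cnj (fhat (\<lambda>t. avg (Delta t g)) \<xi>))"
        by (rule parseval[symmetric])
      also have "\<dots> = (\<Sum>\<xi>\<in>UNIV. (fhat g \<xi> * cnj (fhat g \<xi>))^2)"
        unfolding autocorr[symmetric] cnj_fhat_prod by (simp add: power2_eq_square)
      finally show ?thesis .
    qed
    then show ?thesis by simp
  qed
  also have "\<dots> = (\<Sum>c\<in>UNIV. \<Sum>\<xi>\<in>UNIV. (fhat (Delta c f) \<xi> * cnj (fhat (Delta c f) \<xi>))^2) / 2 ^ card (UNIV :: 'n set)"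
    unfolding avg_def ..
  finally show ?thesis .
qed

lemma sum_h2:
  fixes g :: "('n::finite) f2vec \<Rightarrow> complex"
  shows "(\<Sum>a\<in>UNIV. \<Sum>b\<in>UNIV. fhat (Delta a g) b * cnj (fhat (Delta a g) b))
     = 2 ^ card (UNIV :: 'n set) * (avg (\<lambda>x. g x * cnj (g x)))^2"
proof -
  define G where "G = (\<lambda>x. g x * cnj (g x))"
  have cG: "cnj (G x) = G x" for x unfolding G_def by (simp add: mult.commute)
  have "(\<Sum>a\<in>UNIV. \<Sum>b\<in>UNIV. fhat (Delta a g) b * cnj (fhat (Delta a g) b))
      = (\<Sum>a\<in>UNIV. avg (\<lambda>x. Delta a G x))"
    unfolding parseval by (simp add: Delta_def G_def cG mult_ac)
  also have "\<dots> = 2 ^ card (UNIV :: 'n set) * avg (\<lambda>a. avg (\<lambda>x. Delta a G x))"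
    unfolding avg_def[of "\<lambda>a. avg (\<lambda>x. Delta a G x)"] by simp
  also have "\<dots> = 2 ^ card (UNIV :: 'n set) * (avg G * cnj (avg G))"
    by (simp only: avg_swap[of "\<lambda>a x. Delta a G x"] delta_avg)
  also have "cnj (avg G) = avg G"
    unfolding avg_def by (simp add: cnj_sum cG)
  finally show ?thesis by (simp add: G_def power2_eq_square)
qed


definition W :: "('n::finite) f2vec \<Rightarrow> 'n f2vec \<Rightarrow> ('n f2vec \<Rightarrow> complex) \<Rightarrow> 'n f2vec \<Rightarrow> complex" where
  "W a b g x = chi b x * g (vadd x a)"

lemma fhat_W: "fhat (Delta a g) b = inner_f (W a b g) g"
  unfolding fhat_def inner_f_def W_def Delta_def chi_def by (simp add: mult_ac)

lemma inner_cnj: "inner_f v u = cnj (inner_f u v)"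
  unfolding inner_f_def avg_def by (simp add: mult.commute)

lemma inner_self_real: fixes g :: "('n::finite) f2vec \<Rightarrow> complex"
  shows "inner_f g g = complex_of_real ((\<Sum>x\<in>UNIV. (cmod (g x))^2) / 2 ^ card (UNIV :: 'n set))"
proof -
  have "(\<Sum>x\<in>UNIV. g x * cnj (g x)) = complex_of_real (\<Sum>x\<in>UNIV. (cmod (g x))^2)"
    by (simp add: complex_norm_square[symmetric])
  then show ?thesis unfolding inner_f_def avg_def by simp
qed

lemma inner_self_nonneg: "0 \<le> Re (inner_f g g)"
  unfolding inner_self_real by (simp add: sum_nonneg)

lemma inner_self_zero: fixes g :: "('n::finite) f2vec \<Rightarrow> complex"
  assumes "inner_f g g = 0" shows "g x = 0"
proof -
  have "complex_of_real ((\<Sum>x\<in>UNIV. (cmod (g x))^2) / 2 ^ card (UNIV :: 'n set)) = 0"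
    using assms unfolding inner_self_real by simp
  then have "(\<Sum>x\<in>UNIV. (cmod (g x))^2) = 0" by (simp only: of_real_eq_0_iff) simp
  then have "(cmod (g x))^2 = 0" by (subst (asm) sum_nonneg_eq_0_iff) auto
  then show ?thesis by simp
qed

lemma avg_add: "avg (\<lambda>x. f x + g x) = avg f + avg g"
  unfolding avg_def by (simp add: sum.distrib add_divide_distrib)
lemma avg_diff: "avg (\<lambda>x. f x - g x) = avg f - avg g"
  unfolding avg_def by (simp add: sum_subtractf diff_divide_distrib)
lemma avg_scal: "avg (\<lambda>x. c * f x) = c * avg f"
  unfolding avg_def by (simp add: sum_distrib_left)

lemma inner_scal1: "inner_f (\<lambda>x. c * u x) v = c * inner_f u v"
  unfolding inner_f_def avg_def by (simp add: sum_distrib_left mult_ac)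

lemma inner_scal2: "inner_f u (\<lambda>x. c * v x) = cnj c * inner_f u v"
  unfolding inner_f_def avg_def by (simp add: sum_distrib_left mult_ac)

lemma inner_sum1: "inner_f (\<lambda>x. \<Sum>i\<in>A. U i x) v = (\<Sum>i\<in>A. inner_f (U i) v)"
  unfolding inner_f_def avg_def
  by (simp add: sum_distrib_right sum_divide_distrib[symmetric]) (subst sum.swap, rule refl)

lemma inner_sum2: "inner_f u (\<lambda>x. \<Sum>i\<in>A. V i x) = (\<Sum>i\<in>A. inner_f u (V i))"
proof -
  have "inner_f u (\<lambda>x. \<Sum>i\<in>A. V i x) = cnj (inner_f (\<lambda>x. \<Sum>i\<in>A. V i x) u)" by (rule inner_cnj)
  also have "\<dots> = cnj (\<Sum>i\<in>A. inner_f (V i) u)" by (simp only: inner_sum1)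
  also have "\<dots> = (\<Sum>i\<in>A. inner_f u (V i))" unfolding cnj_sum by (rule sum.cong[OF refl], rule inner_cnj[symmetric])
  finally show ?thesis .
qed

lemma W_scal: "W a b (\<lambda>x. c * g x) = (\<lambda>x. c * W a b g x)"
  unfolding W_def by (simp add: fun_eq_iff mult_ac)

lemma W_comp: "W a b (W c d g) = (\<lambda>x. chi d a * W (vadd a c) (vadd b d) g x)"
  unfolding W_def by (simp add: fun_eq_iff chi_mult1 chi_mult2 vadd_assoc mult_ac)

lemma W_adj: fixes u v :: "('n::finite) f2vec \<Rightarrow> complex"
  shows "inner_f (W a b u) v = chi b a * inner_f u (W a b v)"
proof -
  have "(\<Sum>x\<in>UNIV. W a b u x * cnj (v x)) = (\<Sum>x\<in>UNIV. W a b u (vadd x a) * cnj (v (vadd x a)))"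
    by (rule sum_shift[of "\<lambda>x. W a b u x * cnj (v x)", symmetric])
  also have "\<dots> = (\<Sum>x\<in>UNIV. chi b a * (u x * cnj (W a b v x)))"
    unfolding W_def by (simp add: chi_mult2 mult_ac)
  finally show ?thesis unfolding inner_f_def avg_def by (simp add: sum_distrib_left)
qed

lemma W_norm: fixes g :: "('n::finite) f2vec \<Rightarrow> complex"
  shows "inner_f (W a b g) (W a b g) = inner_f g g"
proof -
  have "(\<Sum>x\<in>UNIV. W a b g x * cnj (W a b g x)) = (\<Sum>x\<in>UNIV. g (vadd x a) * cnj (g (vadd x a)))"
  proof (rule sum.cong[OF refl])
    fix x
    have "W a b g x * cnj (W a b g x) = (chi b x * chi b x) * (g (vadd x a) * cnj (g (vadd x a)))"
      unfolding W_def by (simp add: mult_ac)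
    then show "W a b g x * cnj (W a b g x) = g (vadd x a) * cnj (g (vadd x a))" by simp
  qed
  also have "\<dots> = (\<Sum>x\<in>UNIV. g x * cnj (g x))" by (rule sum_shift)
  finally show ?thesis unfolding inner_f_def avg_def by simp
qed

lemma cs_identity: fixes u v :: "('n::finite) f2vec \<Rightarrow> complex"
  assumes v1: "inner_f v v = 1"
  shows "inner_f u u - inner_f u v * cnj (inner_f u v)
     = inner_f (\<lambda>x. u x - inner_f u v * v x) (\<lambda>x. u x - inner_f u v * v x)"
proof -
  define c where "c = inner_f u v"
  have e: "inner_f (\<lambda>x. u x - c * v x) (\<lambda>x. u x - c * v x)
     = inner_f u u - cnj c * inner_f u v - c * inner_f v u + c * cnj c * inner_f v v"
  proof -
    have pt: "(u x - c * v x) * cnj (u x - c * v x) = u x * cnj (u x) - cnj c * (u x * cnj (v x)) - c * (v x * cnj (u x)) + c * cnj c * (v x * cnj (v x))" for x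
      by (simp add: algebra_simps)
    show ?thesis unfolding inner_f_def pt by (simp add: avg_add avg_diff avg_scal)
  qed
  show ?thesis unfolding e c_def[symmetric] using v1 by (simp add: inner_cnj[of v u] c_def)
qed

lemma cs_ineq: fixes u v :: "('n::finite) f2vec \<Rightarrow> complex"
  assumes v1: "inner_f v v = 1"
  shows "(cmod (inner_f u v))^2 \<le> Re (inner_f u u)"
proof -
  have "0 \<le> Re (inner_f u u - inner_f u v * cnj (inner_f u v))"
    unfolding cs_identity[OF v1] by (rule inner_self_nonneg)
  then show ?thesis by (simp add: complex_norm_square[symmetric])
qed

lemma cs_eq: fixes u v :: "('n::finite) f2vec \<Rightarrow> complex"
  assumes v1: "inner_f v v = 1" and eq: "inner_f u u = inner_f u v * cnj (inner_f u v)"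
  shows "u = (\<lambda>x. inner_f u v * v x)"
proof
  fix x
  have "inner_f (\<lambda>x. u x - inner_f u v * v x) (\<lambda>x. u x - inner_f u v * v x) = 0"
    using cs_identity[OF v1, of u] eq by simp
  from inner_self_zero[OF this] show "u x = inner_f u v * v x" by simp
qed


lemma sum_pairs: "(\<Sum>p\<in>UNIV. F p) = (\<Sum>a\<in>UNIV. \<Sum>b\<in>UNIV. F (a, b))"
proof -
  have "sum F UNIV = sum F (UNIV \<times> UNIV)" by simp
  also have "\<dots> = (\<Sum>a\<in>UNIV. \<Sum>b\<in>UNIV. F (a, b))" by (rule sum.cartesian_product')
  finally show ?thesis .
qed

definition padd :: "('n f2vec \<times> 'n f2vec) \<Rightarrow> ('n f2vec \<times> 'n f2vec) \<Rightarrow> ('n f2vec \<times> 'n f2vec)" where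
  "padd u v = (vadd (fst u) (fst v), vadd (snd u) (snd v))"

lemma padd_cancel[simp]: "padd (padd s t) t = s"
  unfolding padd_def by (simp add: vadd_assoc)

definition sp :: "(('n::finite) f2vec \<times> 'n f2vec) \<Rightarrow> ('n f2vec \<times> 'n f2vec) \<Rightarrow> complex" where
  "sp u v = chi (fst u) (snd v) * chi (snd u) (fst v)"

lemma sz_iff: "sympl_zero u v \<longleftrightarrow> sp u v = 1"
  unfolding sympl_zero_def sp_def chi_def by (simp add: power_add[symmetric] minus_one_power_iff)

lemma sp_padd: "sp (padd s t) v = sp s v * sp t v"
  unfolding sp_def padd_def by (simp add: chi_mult1 mult_ac)

lemma sp_pm: "sp u v = 1 \<or> sp u v = -1"
  unfolding sp_def using chi_pm[of "fst u" "snd v"] chi_pm[of "snd u" "fst v"] by auto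

lemma sp_sum: fixes s :: "('n::finite) f2vec \<times> 'n f2vec"
  shows "(\<Sum>v\<in>UNIV. sp s v) = (if s = (vzero, vzero) then (2 ^ card (UNIV :: 'n set))^2 else 0)"
proof -
  have "(\<Sum>v\<in>UNIV. sp s v) = (\<Sum>c\<in>UNIV. \<Sum>d\<in>UNIV. chi c (snd s) * chi d (fst s))"
    unfolding sum_pairs sp_def by (simp add: chi_sym mult_ac)
  also have "\<dots> = (\<Sum>c\<in>UNIV. chi c (snd s)) * (\<Sum>d\<in>UNIV. chi d (fst s))"
    by (simp add: sum_product)
  also have "\<dots> = (if s = (vzero, vzero) then (2 ^ card (UNIV :: 'n set))^2 else 0)"
    unfolding chi_sum by (cases s) (auto simp: power2_eq_square)
  finally show ?thesis .
qed

locale stab =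
  fixes \<phi> :: "('n::finite) f2vec \<Rightarrow> complex"
  assumes phi1: "inner_f \<phi> \<phi> = 1"
    and sum4: "(\<Sum>a\<in>UNIV. \<Sum>b\<in>UNIV. (cmod (fhat (Delta a \<phi>) b))^4) = 2 ^ card (UNIV :: 'n set)"
begin

abbreviation h where "h a b \<equiv> fhat (Delta a \<phi>) b"

lemma h_inner: "h a b = inner_f (W a b \<phi>) \<phi>" by (rule fhat_W)

lemma h_le1: "(cmod (h a b))^2 \<le> 1"
  using cs_ineq[OF phi1, of "W a b \<phi>"] unfolding h_inner W_norm phi1 by simp

lemma sum2: "(\<Sum>a\<in>UNIV. \<Sum>b\<in>UNIV. (cmod (h a b))^2) = 2 ^ card (UNIV :: 'n set)"
proof -
  have "complex_of_real (\<Sum>a\<in>UNIV. \<Sum>b\<in>UNIV. (cmod (h a b))^2) = (\<Sum>a\<in>UNIV. \<Sum>b\<in>UNIV. h a b * cnj (h a b))"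
    by (simp add: complex_norm_square[symmetric])
  also have "\<dots> = 2 ^ card (UNIV :: 'n set)"
    unfolding sum_h2 using phi1 unfolding inner_f_def by simp
  finally have "complex_of_real (\<Sum>a\<in>UNIV. \<Sum>b\<in>UNIV. (cmod (h a b))^2) = complex_of_real (2 ^ card (UNIV :: 'n set))"
    by simp
  then show ?thesis by (simp only: of_real_eq_iff)
qed

lemma h01: "cmod (h a b) = 0 \<or> cmod (h a b) = 1"
proof -
  define t where "t a b = (cmod (h a b))^2 - (cmod (h a b))^4" for a b
  have tnn: "0 \<le> t a b" for a b
  proof -
    have "(cmod (h a b))^4 = (cmod (h a b))^2 * (cmod (h a b))^2" by (simp add: power_def)
    also have "\<dots> \<le> (cmod (h a b))^2 * 1" by (rule mult_left_mono[OF h_le1]) simp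
    finally show ?thesis unfolding t_def by simp
  qed
  have "(\<Sum>a\<in>UNIV. \<Sum>b\<in>UNIV. t a b) = 0"
    unfolding t_def by (simp add: sum_subtractf sum2 sum4)
  then have "(\<Sum>b\<in>UNIV. t a b) = 0"
    by (subst (asm) sum_nonneg_eq_0_iff) (auto intro: sum_nonneg tnn)
  then have "t a b = 0"
    by (subst (asm) sum_nonneg_eq_0_iff) (auto intro: tnn)
  then have "(cmod (h a b))^2 * (1 - (cmod (h a b))^2) = 0" unfolding t_def by (simp add: algebra_simps power_def)
  then have "(cmod (h a b))^2 = 0 \<or> (cmod (h a b))^2 = 1" by auto
  then show ?thesis using norm_ge_zero[of "h a b"] by (auto simp: power2_eq_1_iff)
qed

definition L where "L = {(a, b). cmod (h a b) = 1}"

lemma eig: assumes "(a, b) \<in> L" shows "W a b \<phi> = (\<lambda>x. h a b * \<phi> x)"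
proof -
  have "inner_f (W a b \<phi>) (W a b \<phi>) = h a b * cnj (h a b)"
    unfolding W_norm phi1 complex_norm_square[symmetric] using assms unfolding L_def by simp
  from cs_eq[OF phi1 this[unfolded h_inner]] show ?thesis unfolding h_inner .
qed

lemma h_add: assumes "(a, b) \<in> L" "(c, d) \<in> L"
  shows "h (vadd a c) (vadd b d) = chi d a * h a b * h c d"
proof -
  have "W a b (W c d \<phi>) = (\<lambda>x. h c d * (h a b * \<phi> x))"
    unfolding eig[OF assms(2)] W_scal eig[OF assms(1)] ..
  then have "(\<lambda>x. chi d a * W (vadd a c) (vadd b d) \<phi> x) = (\<lambda>x. h c d * (h a b * \<phi> x))"
    unfolding W_comp .
  note fe = this
  have "W (vadd a c) (vadd b d) \<phi> x = chi d a * h a b * h c d * \<phi> x" for x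
  proof -
    have e: "chi d a * W (vadd a c) (vadd b d) \<phi> x = h c d * (h a b * \<phi> x)"
      using fun_cong[OF fe, of x] by simp
    have "W (vadd a c) (vadd b d) \<phi> x = (chi d a * chi d a) * W (vadd a c) (vadd b d) \<phi> x" by simp
    also have "\<dots> = chi d a * (chi d a * W (vadd a c) (vadd b d) \<phi> x)" by (simp only: mult.assoc)
    also have "\<dots> = chi d a * h a b * h c d * \<phi> x" unfolding e by (simp add: mult_ac)
    finally show ?thesis .
  qed
  then have "W (vadd a c) (vadd b d) \<phi> = (\<lambda>x. (chi d a * h a b * h c d) * \<phi> x)" by auto
  then show ?thesis unfolding h_inner[of "vadd a c"] by (simp add: inner_scal1 phi1)
qed

lemma L_zero: "(vzero, vzero) \<in> L"
proof -
  have "W vzero vzero \<phi> = \<phi>" unfolding W_def by auto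
  then show ?thesis unfolding L_def using h_inner[of vzero vzero] phi1 by simp
qed

lemma L_closed: assumes "u \<in> L" "v \<in> L" shows "padd u v \<in> L"
  using assms h_add[of "fst u" "snd u" "fst v" "snd v"] unfolding L_def padd_def
  by (auto simp: norm_mult)

lemma L_iso: assumes "u \<in> L" "v \<in> L" shows "sp u v = 1"
proof -
  obtain a b c d where u: "u = (a, b)" and v: "v = (c, d)" by fastforce
  have 1: "h (vadd a c) (vadd b d) = chi d a * h a b * h c d" using assms u v h_add by simp
  have 2: "h (vadd c a) (vadd d b) = chi b c * h c d * h a b" using assms u v h_add by simp
  have nz: "h a b \<noteq> 0" "h c d \<noteq> 0" using assms u v unfolding L_def by auto
  have "chi d a = chi b c" using 1 2 nz by (simp add: vadd_comm[of a c] vadd_comm[of b d] mult_ac)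
  then show ?thesis unfolding u v sp_def by (simp add: chi_sym[of a d])
qed

lemma card_L: "card L = 2 ^ card (UNIV :: 'n set)"
proof -
  have "(cmod (h a b))^2 = of_bool ((a, b) \<in> L)" for a b
    using h01[of a b] unfolding L_def by auto
  then have "(\<Sum>p\<in>UNIV. of_bool (p \<in> L) :: real) = 2 ^ card (UNIV :: 'n set)"
    using sum2 unfolding sum_pairs by simp
  then have "real (card L) = 2 ^ card (UNIV :: 'n set)" by simp
  then have "real (card L) = real (2 ^ card (UNIV :: 'n set))" by simp
  then show ?thesis by (simp only: of_nat_eq_iff)
qed

end

context stab
begin

definition perp where "perp = {v. \<forall>s\<in>L. sp s v = 1}"

lemma sumL: "(\<Sum>s\<in>L. sp s v) = (if v \<in> perp then of_nat (card L) else 0)"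
proof (cases "v \<in> perp")
  case True
  then have "(\<Sum>s\<in>L. sp s v) = (\<Sum>s\<in>L. 1)" unfolding perp_def by (intro sum.cong) auto
  then show ?thesis using True by simp
next
  case False
  then obtain s0 where s0: "s0 \<in> L" "sp s0 v \<noteq> 1" unfolding perp_def by auto
  then have m: "sp s0 v = -1" using sp_pm[of s0 v] by blast
  have "(\<Sum>s\<in>L. sp s v) = (\<Sum>s\<in>L. sp (padd s s0) v)"
    by (rule sum.reindex_bij_witness[where i="\<lambda>s. padd s s0" and j="\<lambda>s. padd s s0"])
       (auto simp: L_closed s0)
  also have "\<dots> = - (\<Sum>s\<in>L. sp s v)" by (simp add: sp_padd m sum_negf)
  finally show ?thesis using False by simp
qed

lemma card_perp: "card perp = 2 ^ card (UNIV :: 'n set)"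
proof -
  let ?N = "2 ^ card (UNIV :: 'n set) :: complex"
  have "(\<Sum>v\<in>UNIV. \<Sum>s\<in>L. sp s v) = (\<Sum>s\<in>L. \<Sum>v\<in>UNIV. sp s v)" by (rule sum.swap)
  also have "\<dots> = (\<Sum>s\<in>L. if s = (vzero, vzero) then ?N^2 else 0)" by (simp only: sp_sum)
  also have "\<dots> = ?N^2" using L_zero by simp
  finally have 1: "(\<Sum>v\<in>UNIV. \<Sum>s\<in>L. sp s v) = ?N^2" .
  have "(\<Sum>v\<in>UNIV. \<Sum>s\<in>L. sp s v) = (\<Sum>v\<in>UNIV. if v \<in> perp then of_nat (card L) else 0)"
    by (simp only: sumL)
  also have "\<dots> = of_nat (card L) * of_nat (card perp)"
    by (simp add: sum.If_cases)
  finally have "of_nat (card L) * of_nat (card perp) = ?N^2" using 1 by simp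
  then have "?N * of_nat (card perp) = ?N * ?N" unfolding card_L by (simp add: power2_eq_square)
  then have "(of_nat (card perp) :: complex) = of_nat (2 ^ card (UNIV :: 'n set))" by simp
  then show ?thesis by (simp only: of_nat_eq_iff)
qed

lemma L_sub_perp: "L \<subseteq> perp"
  unfolding perp_def using L_iso by auto

lemma L_eq_perp: "L = perp"
proof (rule card_subset_eq)
  show "finite perp" by simp
  show "L \<subseteq> perp" by (rule L_sub_perp)
  show "card L = card perp" by (simp add: card_L card_perp)
qed

lemma L_lagr: "lagrangian L"
proof -
  have sub: "subspace2 L" unfolding subspace2_def using L_zero L_closed unfolding padd_def by auto
  have "sympl_zero u v" if "u \<in> L" "v \<in> L" for u v
    unfolding sz_iff using that by (rule L_iso)
  then have iso: "isotropic L" unfolding isotropic_def using sub by blast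
  have "M = L" if "isotropic M" "L \<subseteq> M" for M
  proof
    show "L \<subseteq> M" by fact
    show "M \<subseteq> L"
    proof
      fix v assume "v \<in> M"
      then have "\<forall>s\<in>L. sp s v = 1" using that unfolding isotropic_def sz_iff by auto
      then have "v \<in> perp" unfolding perp_def by simp
      then show "v \<in> L" using L_eq_perp by blast
    qed
  qed
  then show ?thesis unfolding lagrangian_def using iso by auto
qed

lemma lagr_of_eq: "lagr_of \<phi> = L"
  unfolding lagr_of_def
proof (rule the_equality)
  show "lagrangian L \<and> (\<forall>a b. cmod (h a b) = (if (a, b) \<in> L then 1 else 0))"
    using L_lagr h01 unfolding L_def by auto
  fix M assume "lagrangian M \<and> (\<forall>a b. cmod (h a b) = (if (a, b) \<in> M then 1 else 0))"
  then have "\<forall>a b. (a, b) \<in> M \<longleftrightarrow> (a, b) \<in> L" unfolding L_def by auto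
  then show "M = L" by auto
qed

end

context stab
begin

definition cc where "cc u = h (fst u) (snd u)"

definition Pop where "Pop g = (\<lambda>x. \<Sum>u\<in>L. cnj (cc u) * W (fst u) (snd u) g x)"

lemma h_adj: "cnj (h a b) * chi b a = h a b"
proof -
  have "h a b = chi b a * inner_f \<phi> (W a b \<phi>)" unfolding h_inner by (rule W_adj)
  also have "inner_f \<phi> (W a b \<phi>) = cnj (h a b)" unfolding h_inner by (rule inner_cnj)
  finally have "h a b = chi b a * cnj (h a b)" .
  from arg_cong[where f=cnj, OF this] have "cnj (h a b) = chi b a * h a b"
    by simp
  then show ?thesis by (simp add: mult_ac)
qed

lemma cc_norm: "u \<in> L \<Longrightarrow> cmod (cc u) = 1"
  unfolding cc_def L_def by auto

lemma Pop_herm: "inner_f (Pop g) k = inner_f g (Pop k)"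
proof -
  have "inner_f (Pop g) k = (\<Sum>u\<in>L. cnj (cc u) * inner_f (W (fst u) (snd u) g) k)"
    unfolding Pop_def inner_sum1 inner_scal1 ..
  also have "\<dots> = (\<Sum>u\<in>L. cc u * inner_f g (W (fst u) (snd u) k))"
  proof (rule sum.cong[OF refl])
    fix u
    have "cnj (cc u) * chi (snd u) (fst u) = cc u" unfolding cc_def by (rule h_adj)
    then show "cnj (cc u) * inner_f (W (fst u) (snd u) g) k = cc u * inner_f g (W (fst u) (snd u) k)"
      unfolding W_adj by (metis mult.assoc)
  qed
  also have "\<dots> = inner_f g (Pop k)"
    unfolding Pop_def inner_sum2 inner_scal2 by simp
  finally show ?thesis .
qed

lemma L_closed': "u \<in> L \<Longrightarrow> (a, b) \<in> L \<Longrightarrow> (vadd (fst u) a, vadd (snd u) b) \<in> L"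
  using L_closed[of u "(a, b)"] unfolding padd_def by simp

lemma W_sum: "W a b (\<lambda>y. \<Sum>u\<in>A. F u y) x = (\<Sum>u\<in>A. W a b (F u) x)"
  unfolding W_def by (simp add: sum_distrib_left)

lemma cc_add: assumes "v \<in> L" "w \<in> L"
  shows "cnj (cc v) * cnj (cc w) * chi (snd w) (fst v) = cnj (cc (padd v w))"
proof -
  obtain a b c d where v: "v = (a, b)" and w: "w = (c, d)" by fastforce
  have "cc (padd v w) = chi d a * cc v * cc w"
    unfolding cc_def padd_def v w using h_add assms v w by simp
  then show ?thesis unfolding v w by (simp add: mult_ac)
qed

lemma Pop_Pop: "Pop (Pop g) x = 2 ^ card (UNIV :: 'n set) * Pop g x"
proof -
  have "Pop (Pop g) x = (\<Sum>v\<in>L. \<Sum>w\<in>L. cnj (cc (padd v w)) * W (fst (padd v w)) (snd (padd v w)) g x)"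
  proof -
    have "Pop (Pop g) x = (\<Sum>v\<in>L. cnj (cc v) * (\<Sum>w\<in>L. cnj (cc w) * W (fst v) (snd v) (W (fst w) (snd w) g) x))"
      unfolding Pop_def[of "Pop g"] unfolding Pop_def W_sum W_scal ..
    also have "\<dots> = (\<Sum>v\<in>L. \<Sum>w\<in>L. cnj (cc (padd v w)) * W (fst (padd v w)) (snd (padd v w)) g x)"
    proof (rule sum.cong[OF refl])
      fix v assume v: "v \<in> L"
      show "cnj (cc v) * (\<Sum>w\<in>L. cnj (cc w) * W (fst v) (snd v) (W (fst w) (snd w) g) x)
          = (\<Sum>w\<in>L. cnj (cc (padd v w)) * W (fst (padd v w)) (snd (padd v w)) g x)"
        unfolding sum_distrib_left
      proof (rule sum.cong[OF refl])
        fix w assume w: "w \<in> L"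
        have "cnj (cc v) * (cnj (cc w) * W (fst v) (snd v) (W (fst w) (snd w) g) x)
            = (cnj (cc v) * cnj (cc w) * chi (snd w) (fst v)) * W (vadd (fst v) (fst w)) (vadd (snd v) (snd w)) g x"
          unfolding W_comp by (simp add: mult_ac)
        then show "cnj (cc v) * (cnj (cc w) * W (fst v) (snd v) (W (fst w) (snd w) g) x)
            = cnj (cc (padd v w)) * W (fst (padd v w)) (snd (padd v w)) g x"
          unfolding cc_add[OF v w] by (simp add: padd_def)
      qed
    qed
    finally show ?thesis .
  qed
  also have "\<dots> = (\<Sum>v\<in>L. Pop g x)"
  proof (rule sum.cong[OF refl])
    fix v assume v: "v \<in> L"
    have "(\<Sum>w\<in>L. cnj (cc (padd v w)) * W (fst (padd v w)) (snd (padd v w)) g x)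
        = (\<Sum>u\<in>L. cnj (cc u) * W (fst u) (snd u) g x)"
      by (rule sum.reindex_bij_witness[where i="\<lambda>u. padd v u" and j="\<lambda>w. padd v w"])
         (auto simp: v L_closed' padd_def vadd_assoc[symmetric])
    then show "(\<Sum>w\<in>L. cnj (cc (padd v w)) * W (fst (padd v w)) (snd (padd v w)) g x) = Pop g x"
      unfolding Pop_def by simp
  qed
  also have "\<dots> = 2 ^ card (UNIV :: 'n set) * Pop g x" by (simp add: card_L)
  finally show ?thesis .
qed

lemma Pop_phi: "Pop \<phi> = (\<lambda>x. 2 ^ card (UNIV :: 'n set) * \<phi> x)"
proof
  fix x
  have "Pop \<phi> x = (\<Sum>u\<in>L. \<phi> x)"
    unfolding Pop_def
  proof (rule sum.cong[OF refl])
    fix u assume u: "u \<in> L"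
    have "(a, b) \<in> L \<Longrightarrow> W a b \<phi> x = cc (a, b) * \<phi> x" for a b
      using eig[of a b] unfolding cc_def by simp
    then have 1: "W (fst u) (snd u) \<phi> x = cc u * \<phi> x" using u by (metis prod.collapse)
    have "cnj (cc u) * cc u = 1"
      using cc_norm[OF u] by (metis complex_norm_square mult.commute of_real_1 power_one)
    then show "cnj (cc u) * W (fst u) (snd u) \<phi> x = \<phi> x" unfolding 1 by (metis mult.assoc mult_1)
  qed
  then show "Pop \<phi> x = 2 ^ card (UNIV :: 'n set) * \<phi> x" by (simp add: card_L)
qed

lemma lower:
  fixes f :: "'n f2vec \<Rightarrow> complex"
  shows "2 ^ card (UNIV :: 'n set) * (cmod (inner_f f \<phi>))^2 \<le> (\<Sum>u\<in>L. cmod (fhat (Delta (fst u) f) (snd u)))"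
proof -
  define N :: complex where "N = 2 ^ card (UNIV :: 'n set)"
  define Y where "Y = inner_f (Pop f) f"
  have Y: "Y = (\<Sum>u\<in>L. cnj (cc u) * fhat (Delta (fst u) f) (snd u))"
    unfolding Y_def Pop_def inner_sum1 inner_scal1 fhat_W ..
  have PP: "inner_f (Pop f) (Pop f) = N * Y"
  proof -
    have "inner_f (Pop f) (Pop f) = inner_f (Pop (Pop f)) f" by (rule Pop_herm[symmetric])
    also have "\<dots> = inner_f (\<lambda>x. N * Pop f x) f" unfolding Pop_Pop N_def ..
    finally show ?thesis unfolding inner_scal1 Y_def .
  qed
  have Pphi: "inner_f (Pop f) \<phi> = N * inner_f f \<phi>"
    unfolding Pop_herm Pop_phi inner_scal2 N_def by simp
  have "(cmod (N * inner_f f \<phi>))^2 \<le> Re (N * Y)"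
    using cs_ineq[OF phi1, of "Pop f"] unfolding PP Pphi .
  then have 1: "(2 ^ card (UNIV :: 'n set))^2 * (cmod (inner_f f \<phi>))^2 \<le> 2 ^ card (UNIV :: 'n set) * Re Y"
    unfolding N_def by (simp add: norm_mult norm_power power_mult_distrib)
  have "Re Y \<le> cmod Y" by (rule complex_Re_le_cmod)
  also have "\<dots> \<le> (\<Sum>u\<in>L. cmod (cnj (cc u) * fhat (Delta (fst u) f) (snd u)))"
    unfolding Y by (rule norm_sum)
  also have "\<dots> = (\<Sum>u\<in>L. cmod (fhat (Delta (fst u) f) (snd u)))"
    by (rule sum.cong[OF refl]) (simp add: norm_mult cc_norm)
  finally have 2: "Re Y \<le> (\<Sum>u\<in>L. cmod (fhat (Delta (fst u) f) (snd u)))" .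
  have "(2::real) ^ card (UNIV :: 'n set) * ((2 ^ card (UNIV :: 'n set)) * (cmod (inner_f f \<phi>))^2)
      \<le> 2 ^ card (UNIV :: 'n set) * (\<Sum>u\<in>L. cmod (fhat (Delta (fst u) f) (snd u)))"
    using 1 2 by (smt (verit) mult_left_mono power2_eq_square zero_le_power mult.assoc)
  then show ?thesis by simp
qed

end

lemma Q_real:
  fixes g :: "('n::finite) f2vec \<Rightarrow> complex"
  shows "avg (\<lambda>x. avg (\<lambda>a. avg (\<lambda>b. avg (\<lambda>c. Delta a (Delta b (Delta c g)) x))))
     = complex_of_real ((\<Sum>c\<in>UNIV. \<Sum>\<xi>\<in>UNIV. (cmod (fhat (Delta c g) \<xi>))^4) / 2 ^ card (UNIV :: 'n set))"
proof -
  have "(fhat (Delta c g) \<xi> * cnj (fhat (Delta c g) \<xi>))^2 = complex_of_real ((cmod (fhat (Delta c g) \<xi>))^4)" for c \<xi>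
  proof -
    have "(fhat (Delta c g) \<xi> * cnj (fhat (Delta c g) \<xi>))^2 = (complex_of_real ((cmod (fhat (Delta c g) \<xi>))^2))^2"
      by (simp only: complex_norm_square)
    then show ?thesis by simp
  qed
  then show ?thesis unfolding U3_inner by simp
qed

lemma U3_eq:
  fixes g :: "('n::finite) f2vec \<Rightarrow> complex"
  shows "U3 g = ((\<Sum>c\<in>UNIV. \<Sum>\<xi>\<in>UNIV. (cmod (fhat (Delta c g) \<xi>))^4) / 2 ^ card (UNIV :: 'n set)) powr (1/8)"
  unfolding U3_def Q_real by simp

lemma pow8: fixes R :: real assumes "0 \<le> R" shows "(R powr (1/8))^4 = sqrt R" "(R powr (1/8))^8 = R"
proof -
  have "(R powr (1/8))^4 = sqrt R \<and> (R powr (1/8))^8 = R"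
  proof (cases "R = 0")
    case True then show ?thesis by simp
  next
    case False
    then have "(R powr (1/8))^4 = R powr (1/2)" "(R powr (1/8))^8 = R powr 1"
      by (simp_all add: powr_power)
    then show ?thesis using assms by (simp add: powr_half_sqrt)
  qed
  then show "(R powr (1/8))^4 = sqrt R" "(R powr (1/8))^8 = R" by auto
qed

theorem lemma2p17:
  fixes \<phi> f :: "('n::finite) f2vec \<Rightarrow> complex"
  assumes "stabilizer_state \<phi>"
    and "f \<noteq> (\<lambda>x. 0)"
  shows "(cmod (inner_f f \<phi>) / norm2 f) ^ 4 \<le> char_dist_set f (lagr_of \<phi>)
         \<and> char_dist_set f (lagr_of \<phi>) \<le> (U3 f / norm2 f) ^ 4"
proof -
  define N :: real where "N = 2 ^ card (UNIV :: 'n set)"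
  have Npos: "N > 0" unfolding N_def by simp
  have n1: "norm2 \<phi> = 1" and u1: "U3 \<phi> = 1" using assms(1) unfolding stabilizer_state_def by auto
  have phi1: "inner_f \<phi> \<phi> = 1"
  proof -
    define r where "r = (\<Sum>x\<in>UNIV. (cmod (\<phi> x))^2) / 2 ^ card (UNIV :: 'n set)"
    have r0: "0 \<le> r" unfolding r_def by (simp add: sum_nonneg)
    have e: "inner_f \<phi> \<phi> = complex_of_real r" unfolding r_def by (rule inner_self_real)
    have "sqrt r = 1" using n1 unfolding norm2_def e by simp
    then have "r = 1" using r0 by simp
    then show ?thesis unfolding e by simp
  qed
  have sum4: "(\<Sum>a\<in>UNIV. \<Sum>b\<in>UNIV. (cmod (fhat (Delta a \<phi>) b))^4) = 2 ^ card (UNIV :: 'n set)"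
  proof -
    define R where "R = (\<Sum>c\<in>UNIV. \<Sum>\<xi>\<in>UNIV. (cmod (fhat (Delta c \<phi>) \<xi>))^4) / 2 ^ card (UNIV :: 'n set)"
    have R0: "0 \<le> R" unfolding R_def by (simp add: sum_nonneg)
    have "R powr (1/8) = 1" using u1 unfolding U3_eq R_def .
    then have "R = 1" using pow8(2)[OF R0] by simp
    then show ?thesis unfolding R_def by simp
  qed
  interpret stab \<phi> using phi1 sum4 by unfold_locales
  have lagr: "lagr_of \<phi> = L" by (rule lagr_of_eq)
  define hf where "hf u = cmod (fhat (Delta (fst u) f) (snd u))" for u
  define m where "m = Re (inner_f f f)"
  have m0: "m > 0"
  proof -
    have "m \<ge> 0" unfolding m_def by (rule inner_self_nonneg)
    moreover have "m \<noteq> 0"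
    proof
      assume "m = 0"
      then have "inner_f f f = 0" unfolding m_def inner_self_real by simp
      then have "f x = 0" for x by (rule inner_self_zero)
      then show False using assms(2) by auto
    qed
    ultimately show ?thesis by simp
  qed
  have nf: "norm2 f = sqrt m" unfolding norm2_def m_def ..
  have nf4: "(norm2 f)^4 = m^2"
  proof -
    have "(sqrt m)^4 = ((sqrt m)^2)^2" by simp
    then show ?thesis unfolding nf using m0 by simp
  qed
  define S where "S = (\<Sum>u\<in>L. (hf u)^2)"
  have S0: "0 \<le> S" unfolding S_def by (simp add: sum_nonneg)
  have cds: "char_dist_set f (lagr_of \<phi>) = S / (N * m^2)"
    unfolding char_dist_set_def char_dist_def lagr S_def hf_def nf4 N_def
    by (simp add: sum_divide_distrib)
  have cardL: "real (card L) = N" unfolding card_L N_def by simp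
  define k where "k = cmod (inner_f f \<phi>)"
  define s1 where "s1 = (\<Sum>u\<in>L. hf u)"
  have low1: "N * k^2 \<le> s1" using lower[of f] unfolding k_def s1_def hf_def N_def by simp
  have low2: "s1^2 \<le> S * N" using sum_squared_le_sum_of_squares[of hf L] unfolding s1_def S_def cardL .
  have "(N * k^2)^2 \<le> s1^2" using low1 by (rule power_mono) (simp add: Npos less_imp_le)
  moreover have "(N * k^2)^2 = N * (N * k^4)" by (simp add: eval_nat_numeral algebra_simps)
  moreover have "s1^2 \<le> N * S" using low2 by (simp add: mult.commute)
  ultimately have "N * (N * k^4) \<le> N * S" by linarith
  then have low3: "k^4 \<le> S / N" using Npos by (simp add: field_simps)
  have "(k / norm2 f)^4 = k^4 / m^2" unfolding power_divide nf4 ..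
  also have "\<dots> \<le> (S / N) / m^2" using low3 by (rule divide_right_mono) simp
  also have "\<dots> = char_dist_set f (lagr_of \<phi>)" unfolding cds by simp
  finally have LOW: "(cmod (inner_f f \<phi>) / norm2 f)^4 \<le> char_dist_set f (lagr_of \<phi>)" unfolding k_def .
  define R where "R = (\<Sum>c\<in>UNIV. \<Sum>\<xi>\<in>UNIV. (cmod (fhat (Delta c f) \<xi>))^4) / 2 ^ card (UNIV :: 'n set)"
  have R0: "0 \<le> R" unfolding R_def by (simp add: sum_nonneg)
  have U4: "(U3 f)^4 = sqrt R" unfolding U3_eq R_def[symmetric] using pow8(1)[OF R0] .
  have "S^2 \<le> (\<Sum>u\<in>L. ((hf u)^2)^2) * N"
    using sum_squared_le_sum_of_squares[of "\<lambda>u. (hf u)^2" L] unfolding S_def cardL .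
  also have "(\<Sum>u\<in>L. ((hf u)^2)^2) \<le> (\<Sum>u\<in>UNIV. ((hf u)^2)^2)"
    by (rule sum_mono2) auto
  also have "(\<Sum>u\<in>UNIV. ((hf u)^2)^2) = N * R"
    unfolding sum_pairs hf_def R_def N_def by simp
  finally have "S^2 \<le> (N * R) * N" using Npos by simp
  moreover have "(N * sqrt R)^2 = N * (N * R)" using R0 by (simp add: power_mult_distrib power2_eq_square)
  ultimately have "S^2 \<le> (N * sqrt R)^2" by (simp add: mult_ac)
  then have up1: "S \<le> N * sqrt R" using Npos R0 by (meson abs_le_square_iff mult_nonneg_nonneg real_sqrt_ge_zero abs_of_nonneg less_imp_le power2_le_imp_le)
  have "char_dist_set f (lagr_of \<phi>) = S / (N * m^2)" by (rule cds)
  also have "\<dots> \<le> (N * sqrt R) / (N * m^2)" using up1 by (rule divide_right_mono) (use Npos in simp)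
  also have "\<dots> = (U3 f / norm2 f)^4" unfolding power_divide nf4 U4 using Npos by simp
  finally show ?thesis using LOW by simp
qed


end
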